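(* For every integer $n\ge1$, \[ -\omega(n)=\sum_{\substack{m+k=n\\ m\ge1,\ k\ge0}}p_\psi(m)\,\Omega_m(k). \]
   Context: $p_\psi(n)$ is the number of relatively prime partitions of $n$, i.e. partitions of $n$ whose parts have greatest common divisor $1$. $\omega:\mathbb{Z}\to\mathbb{Z}$ is defined by $\omega(0)=1$; $\omega(m)=(-1)^j$ if $m=\frac{3j^2\pm j}{2}$ for some integer $j\ge1$; $\omega(m)=0$ otherwise (in particular for $m<0$). For $m\ge1$ and integer $k$, $\Omega_m(k)=\sum_{j\ge0}\omega(k-jm)=\omega(k)+\omega(k-m)+\omega(k-2m)+\cdots$. *)

theory Defs
  imports Main "HOL-Library.Multiset"
begin

definition int_partitions :: "nat \<Rightarrow> nat multiset set" where
  "int_partitions n = {P. (\<forall>x\<in>#P. 0 < x) \<and> sum_mset P = n}"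

definition p_psi :: "nat \<Rightarrow> nat" where
  "p_psi n = card {P \<in> int_partitions n. Gcd (set_mset P) = 1}"

definition pent :: "int \<Rightarrow> nat \<Rightarrow> bool" where
  "pent m j \<longleftrightarrow> 1 \<le> j \<and> (2 * m = 3 * int j ^ 2 + int j \<or> 2 * m = 3 * int j ^ 2 - int j)"

definition omega :: "int \<Rightarrow> int" where
  "omega m = (if m = 0 then 1
              else if \<exists>j. pent m j \<and> even j then 1
              else if \<exists>j. pent m j \<and> odd j then -1
              else 0)"

text \<open>Omega_m(k) = sum_{j>=0} omega(k - j m); terms with j > k vanish
  (argument negative since m >= 1), so the sum is finite.\<close>
definition Omega :: "nat \<Rightarrow> int \<Rightarrow> int" where
  "Omega m k = (\<Sum>j\<le>nat k. omega (k - int j * int m))"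

end

theory Submission
  imports Defs "HOL-Computational_Algebra.Formal_Power_Series"
begin

definition tri :: "nat \<Rightarrow> nat" where "tri k = k * (k + 1) div 2"

lemma tri2: "2 * tri k = k * (k + 1)"
  unfolding tri_def by simp

lemma tri_Suc: "tri (Suc k) = tri k + Suc k"
  using tri2[of k] tri2[of "Suc k"] by simp

lemma tri_0[simp]: "tri 0 = 0" by (simp add: tri_def)

definition PP :: "'a::comm_ring_1 \<Rightarrow> nat \<Rightarrow> nat \<Rightarrow> 'a" where
  "PP x k n = (\<Prod>i\<in>{Suc k..n}. 1 - x ^ i)"

definition ff :: "'a::comm_ring_1 \<Rightarrow> nat \<Rightarrow> nat \<Rightarrow> 'a" where
  "ff x n k = (-1) ^ k * PP x k n * x ^ (n * k + tri k)"

definition gg :: "'a::comm_ring_1 \<Rightarrow> nat \<Rightarrow> nat \<Rightarrow> 'a" where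
  "gg x n k = (-1) ^ k * PP x k n * x ^ ((n + 1) * (k + 1) + tri k)"

lemma PP_Suc_right: "k \<le> n \<Longrightarrow> PP x k (Suc n) = PP x k n * (1 - x ^ Suc n)"
proof -
  assume "k \<le> n"
  then have "{Suc k..Suc n} = insert (Suc n) {Suc k..n}" by auto
  then show ?thesis unfolding PP_def by (simp add: mult.commute)
qed

lemma PP_Suc_left: "Suc k \<le> n \<Longrightarrow> PP x k n = (1 - x ^ Suc k) * PP x (Suc k) n"
proof -
  assume "Suc k \<le> n"
  then have "{Suc k..n} = insert (Suc k) {Suc (Suc k)..n}" by auto
  then show ?thesis unfolding PP_def by simp
qed

lemma PP_same[simp]: "PP x n n = 1" unfolding PP_def by simp

lemma step0: "ff x (Suc n) 0 - ff x n 0 = - gg x n 0"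
  unfolding ff_def gg_def using PP_Suc_right[of 0 n x] by (simp add: algebra_simps)

lemma stepk:
  assumes "Suc k \<le> n"
  shows "ff x (Suc n) (Suc k) - ff x n (Suc k) = gg x n k - gg x n (Suc k)"
proof -
  define Q where "Q = PP x (Suc k) n"
  define E where "E = x ^ (n * Suc k + tri k)"
  define y where "y = x ^ Suc k"
  define z where "z = x ^ Suc n"
  have e1: "x ^ (Suc n * Suc k + tri (Suc k)) = E * y * y"
  proof -
    have "Suc n * Suc k + tri (Suc k) = (n * Suc k + tri k) + Suc k + Suc k"
      by (simp add: tri_Suc)
    then show ?thesis unfolding E_def y_def by (simp add: power_add)
  qed
  have e2: "x ^ (n * Suc k + tri (Suc k)) = E * y"
  proof -
    have "n * Suc k + tri (Suc k) = (n * Suc k + tri k) + Suc k"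
      by (simp add: tri_Suc)
    then show ?thesis unfolding E_def y_def by (simp add: power_add)
  qed
  have e3: "x ^ ((n + 1) * (k + 1) + tri k) = E * y"
  proof -
    have "(n + 1) * (k + 1) + tri k = (n * Suc k + tri k) + Suc k"
      by simp
    then show ?thesis unfolding E_def y_def by (simp add: power_add)
  qed
  have e4: "x ^ ((n + 1) * (Suc k + 1) + tri (Suc k)) = E * y * y * z"
  proof -
    have "(n + 1) * (Suc k + 1) + tri (Suc k) = (n * Suc k + tri k) + Suc k + Suc k + Suc n"
      by (simp add: tri_Suc)
    then show ?thesis unfolding E_def y_def z_def by (simp add: power_add)
  qed
  have p1: "PP x (Suc k) (Suc n) = Q * (1 - z)"
    using PP_Suc_right[of "Suc k" n x] assms unfolding Q_def z_def by simp
  have p2: "PP x k n = (1 - y) * Q"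
    using PP_Suc_left[OF assms, of x] unfolding Q_def y_def by simp
  show ?thesis
    unfolding ff_def gg_def e1 e2 e3 e4 p1 p2 Q_def[symmetric]
    by (simp add: algebra_simps)
qed

lemma tele:
  assumes "m \<le> n"
  shows "(\<Sum>k\<le>m. ff x (Suc n) k - ff x n k) = - gg x n m"
  using assms
proof (induction m)
  case 0
  then show ?case using step0 by simp
next
  case (Suc m)
  then show ?case using stepk[of m n x] by simp
qed

definition SS :: "'a::comm_ring_1 \<Rightarrow> nat \<Rightarrow> 'a" where
  "SS x n = (\<Sum>k\<le>n. ff x n k)"

definition pa :: "nat \<Rightarrow> nat" where "pa j = j * j + tri (j - 1)"
definition pb :: "nat \<Rightarrow> nat" where "pb j = j * j + tri j"

lemma SS_Suc: "SS x (Suc n) = SS x n + (-1) ^ Suc n * (x ^ pa (Suc n) + x ^ pb (Suc n))"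
proof -
  have "SS x (Suc n) = (\<Sum>k\<le>n. ff x (Suc n) k) + ff x (Suc n) (Suc n)"
    unfolding SS_def by simp
  also have "(\<Sum>k\<le>n. ff x (Suc n) k) = SS x n + (\<Sum>k\<le>n. ff x (Suc n) k - ff x n k)"
    unfolding SS_def by (simp add: sum_subtractf)
  also have "(\<Sum>k\<le>n. ff x (Suc n) k - ff x n k) = - gg x n n"
    using tele[of n n x] by simp
  also have "gg x n n = (-1) ^ n * x ^ pa (Suc n)"
    unfolding gg_def pa_def by (simp add: algebra_simps)
  also have "ff x (Suc n) (Suc n) = (-1) ^ Suc n * x ^ pb (Suc n)"
    unfolding ff_def pb_def by simp
  finally show ?thesis by (simp add: algebra_simps)
qed

lemma SS_closed: "SS x n = 1 + (\<Sum>j\<in>{1..n}. (-1) ^ j * (x ^ pa j + x ^ pb j))"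
proof (induction n)
  case 0
  then show ?case unfolding SS_def ff_def PP_def by simp
next
  case (Suc n)
  then show ?case using SS_Suc[of x n] by simp
qed


lemma neg1_pow_nth: "fps_nth ((-1::'a::comm_ring_1 fps) ^ j * f) m = (-1) ^ j * fps_nth f m"
  by (cases "even j") auto

lemma ff_nth_zero:
  assumes "1 \<le> k" "m \<le> N"
  shows "fps_nth (ff (fps_X::'a::comm_ring_1 fps) N k) m = 0"
proof -
  obtain k' where k: "k = Suc k'" using assms(1) by (cases k) auto
  have "tri k \<ge> 1" unfolding k tri_Suc by simp
  moreover have "N \<le> N * k" using assms(1) by simp
  ultimately have "m < N * k + tri k" using assms(2) by linarith
  then show ?thesis unfolding ff_def by (simp add: fps_X_power_mult_right_nth)
qed

lemma coeff_E:
  assumes "m \<le> N"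
  shows "fps_nth (PP (fps_X::'a::comm_ring_1 fps) 0 N) m =
     (if m = 0 then 1 else 0) + (\<Sum>j\<in>{1..N}. (-1) ^ j * ((if m = pa j then 1 else 0) + (if m = pb j then 1 else 0)))"
proof -
  have "SS (fps_X::'a fps) N = ff fps_X N 0 + (\<Sum>k\<in>{1..N}. ff fps_X N k)"
    unfolding SS_def by (simp add: atMost_atLeast0 sum.atLeast_Suc_atMost)
  have "fps_nth (SS (fps_X::'a fps) N) m = fps_nth (PP (fps_X::'a fps) 0 N) m"
  proof -
    have "fps_nth (\<Sum>k\<in>{1..N}. ff (fps_X::'a fps) N k) m = 0"
      by (simp add: fps_sum_nth ff_nth_zero[OF _ assms])
    then show ?thesis using \<open>SS (fps_X::'a fps) N = _\<close> by (simp add: ff_def)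
  qed
  moreover have "fps_nth (SS (fps_X::'a fps) N) m =
     (if m = 0 then 1 else 0) + (\<Sum>j\<in>{1..N}. (-1) ^ j * ((if m = pa j then 1 else 0) + (if m = pb j then 1 else 0)))"
    unfolding SS_closed by (simp add: fps_sum_nth neg1_pow_nth)
  ultimately show ?thesis by simp
qed


lemma tri_mono: "a \<le> b \<Longrightarrow> tri a \<le> tri b"
  unfolding tri_def by (intro div_le_mono mult_le_mono) auto

lemma pb2: "2 * pb j = 3 * j * j + j"
  unfolding pb_def using tri2[of j] by (simp add: algebra_simps)

lemma pa2: "1 \<le> j \<Longrightarrow> 2 * pa j + j = 3 * j * j"
proof -
  assume "1 \<le> j"
  then obtain i where j: "j = Suc i" by (cases j) auto
  show ?thesis unfolding pa_def j using tri2[of i] by (simp add: algebra_simps)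
qed

lemma pent_iff: "pent (int m) j \<longleftrightarrow> 1 \<le> j \<and> (m = pa j \<or> m = pb j)"
proof -
  have b: "2 * int m = 3 * int j ^ 2 + int j \<longleftrightarrow> m = pb j"
  proof -
    have "2 * int m = 3 * int j ^ 2 + int j \<longleftrightarrow> 2 * m = 3 * j * j + j"
      by (simp add: power2_eq_square flip: of_nat_mult of_nat_add) linarith
    also have "\<dots> \<longleftrightarrow> m = pb j" using pb2[of j] by linarith
    finally show ?thesis .
  qed
  have a: "1 \<le> j \<Longrightarrow> 2 * int m = 3 * int j ^ 2 - int j \<longleftrightarrow> m = pa j"
  proof -
    assume j: "1 \<le> j"
    have "2 * int m = 3 * int j ^ 2 - int j \<longleftrightarrow> 2 * m + j = 3 * j * j"
      by (simp add: power2_eq_square flip: of_nat_mult of_nat_add) linarith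
    also have "\<dots> \<longleftrightarrow> m = pa j" using pa2[OF j] by linarith
    finally show ?thesis .
  qed
  show ?thesis unfolding pent_def using a b by auto
qed

lemma pa_ge: "1 \<le> j \<Longrightarrow> j \<le> pa j"
  unfolding pa_def by (simp add: trans_le_add1)

lemma pa_lt_pb: "1 \<le> j \<Longrightarrow> pa j < pb j"
proof -
  assume "1 \<le> j"
  then obtain i where j: "j = Suc i" by (cases j) auto
  show ?thesis unfolding pa_def pb_def j tri_Suc by simp
qed

lemma pb_lt_pa: "j < j' \<Longrightarrow> pb j < pa j'"
proof -
  assume "j < j'"
  then obtain i where j': "j' = Suc i" and "j \<le> i" by (cases j') auto
  have "tri j \<le> tri i" using \<open>j \<le> i\<close> by (rule tri_mono)
  moreover have "j * j \<le> i * i" using \<open>j \<le> i\<close> by (simp add: mult_le_mono)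
  ultimately show ?thesis unfolding pa_def pb_def j' by simp
qed

lemma pent_unique:
  assumes "1 \<le> j" "1 \<le> j'" "m = pa j \<or> m = pb j" "m = pa j' \<or> m = pb j'"
  shows "j = j'"
proof (rule ccontr)
  assume "j \<noteq> j'"
  then have "j < j' \<or> j' < j" by arith
  then show False
  proof
    assume "j < j'"
    then have "pb j < pa j'" by (rule pb_lt_pa)
    then show False using assms pa_lt_pb[of j] pa_lt_pb[of j'] by auto
  next
    assume "j' < j"
    then have "pb j' < pa j" by (rule pb_lt_pa)
    then show False using assms pa_lt_pb[of j] pa_lt_pb[of j'] by auto
  qed
qed

lemma omega_sum:
  assumes "m \<le> N"
  shows "omega (int m) = (if m = 0 then 1 else 0) +
     (\<Sum>j\<in>{1..N}. (-1) ^ j * ((if m = pa j then 1 else 0) + (if m = pb j then 1 else 0)))"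
proof (cases "\<exists>j. 1 \<le> j \<and> (m = pa j \<or> m = pb j)")
  case True
  then obtain j where j: "1 \<le> j" "m = pa j \<or> m = pb j" by blast
  have "j \<le> pa j" using pa_ge[OF j(1)] .
  then have jm: "j \<le> m" using j pa_lt_pb[OF j(1)] by auto
  then have m0: "m \<noteq> 0" using j(1) by auto
  have jN: "j \<in> {1..N}" using jm assms j(1) by auto
  define f :: "nat \<Rightarrow> int" where "f j = (-1) ^ j * ((if m = pa j then 1 else 0) + (if m = pb j then 1 else 0))" for j
  have "(\<Sum>j\<in>{1..N}. f j) = f j + (\<Sum>j\<in>{1..N} - {j}. f j)"
    using jN by (simp add: sum.remove)
  also have "(\<Sum>j\<in>{1..N} - {j}. f j) = 0"
  proof (rule sum.neutral, rule ballI)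
    fix i assume "i \<in> {1..N} - {j}"
    then have i: "i \<in> {1..N}" "i \<noteq> j" by auto
    then have "\<not> (m = pa i \<or> m = pb i)" using pent_unique[of j i m] j by auto
    then show "f i = 0" unfolding f_def by auto
  qed
  also have "f j = (-1) ^ j" unfolding f_def using j pa_lt_pb[OF j(1)] by auto
  finally have s: "(\<Sum>j\<in>{1..N}. f j) = (-1) ^ j" by simp
  have om: "omega (int m) = (-1) ^ j"
  proof (cases "even j")
    case True
    then have "\<exists>j. pent (int m) j \<and> even j" using j pent_iff by blast
    then show ?thesis unfolding omega_def using m0 True by simp
  next
    case False
    have "\<not> (\<exists>j. pent (int m) j \<and> even j)"
      using pent_unique[of j _ m] j False pent_iff by metis
    moreover have "\<exists>j. pent (int m) j \<and> odd j" using j pent_iff False by blast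
    ultimately show ?thesis unfolding omega_def using m0 False by simp
  qed
  show ?thesis using s om m0 unfolding f_def by simp
next
  case False
  then have np: "\<not> pent (int m) j" for j using pent_iff by blast
  have "(\<Sum>j\<in>{1..N}. (-1) ^ j * ((if m = pa j then 1 else 0) + (if m = pb j then 1 else 0))) = (0::int)"
    using False by (intro sum.neutral) auto
  then show ?thesis unfolding omega_def using np by simp
qed


lemma coeff_E_omega:
  assumes "m \<le> N"
  shows "fps_nth (PP (fps_X::int fps) 0 N) m = omega (int m)"
  using coeff_E[OF assms] omega_sum[OF assms] by simp

lemma mem_le_sum_mset: "(x::nat) \<in># P \<Longrightarrow> x \<le> sum_mset P"
proof -
  assume "x \<in># P"
  then obtain P' where "P = add_mset x P'" by (metis multi_member_split)
  then show ?thesis by simp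
qed

lemma size_le_sum_mset: "(\<forall>x\<in>#P. (0::nat) < x) \<Longrightarrow> size P \<le> sum_mset P"
proof (induction P)
  case empty
  then show ?case by simp
next
  case (add x P)
  then show ?case by auto
qed

lemma finite_int_partitions: "finite (int_partitions d)"
proof -
  have "int_partitions d \<subseteq> (\<Union>s\<in>{..d}. multisets_of_size {1..d} s)"
  proof
    fix P assume "P \<in> int_partitions d"
    then have P: "\<forall>x\<in>#P. 0 < x" "sum_mset P = d" unfolding int_partitions_def by auto
    have "set_mset P \<subseteq> {1..d}" using P mem_le_sum_mset[of _ P] by force
    moreover have "size P \<le> d" using size_le_sum_mset[OF P(1)] P(2) by simp
    ultimately show "P \<in> (\<Union>s\<in>{..d}. multisets_of_size {1..d} s)"
      unfolding multisets_of_size_def by auto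
  qed
  moreover have "finite (\<Union>s\<in>{..d}. multisets_of_size {1..d} s)" by auto
  ultimately show ?thesis by (rule finite_subset)
qed

definition parts_le :: "nat \<Rightarrow> nat \<Rightarrow> nat multiset set" where
  "parts_le N d = {P \<in> int_partitions d. \<forall>x\<in>#P. x \<le> N}"

lemma finite_parts_le: "finite (parts_le N d)"
  unfolding parts_le_def using finite_int_partitions by auto

lemma parts_le_big: "d \<le> N \<Longrightarrow> parts_le N d = int_partitions d"
  unfolding parts_le_def int_partitions_def using mem_le_sum_mset by force

lemma parts_le_0: "parts_le 0 d = (if d = 0 then {{#}} else {})"
proof -
  have "P \<in> parts_le 0 d \<longleftrightarrow> P = {#} \<and> d = 0" for P
    unfolding parts_le_def int_partitions_def by (cases P) auto
  then show ?thesis by auto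
qed

definition HH :: "nat \<Rightarrow> int fps" where
  "HH i = Abs_fps (\<lambda>k. if i dvd k then 1 else 0)"

lemma HH_inv:
  assumes "1 \<le> i"
  shows "(1 - fps_X ^ i) * HH i = 1"
proof (rule fps_ext)
  fix k
  have "fps_nth ((1 - fps_X ^ i) * HH i) k = fps_nth (HH i) k - fps_nth (fps_X ^ i * HH i) k"
    by (simp add: algebra_simps)
  also have "\<dots> = (if k = 0 then 1 else 0)"
  proof (cases "k < i")
    case True
    then have "i dvd k \<longleftrightarrow> k = 0" using dvd_imp_le by auto
    then show ?thesis using True by (simp add: fps_X_power_mult_nth HH_def)
  next
    case False
    then have "i dvd k \<longleftrightarrow> i dvd (k - i)"
      by (metis dvd_minus_self le_refl not_less)
    then show ?thesis using False assms by (simp add: fps_X_power_mult_nth HH_def)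
  qed
  finally show "fps_nth ((1 - fps_X ^ i) * HH i) k = fps_nth 1 k" by simp
qed


lemma parts_rec:
  "card (parts_le (Suc N) d) = (\<Sum>i=0..d. (if Suc N dvd (d - i) then card (parts_le N i) else 0))"
proof -
  define M where "M = Suc N"
  define I where "I = {i\<in>{0..d}. M dvd (d - i)}"
  define phi where "phi i Q = Q + replicate_mset ((d - i) div M) M" for i Q
  define A where "A i = phi i ` parts_le N i" for i
  have M0: "0 < M" unfolding M_def by simp
  have noM: "\<not> M \<in># Q" if "Q \<in> parts_le N i" for Q i
    using that unfolding parts_le_def M_def by auto
  have eq: "parts_le M d = (\<Union>i\<in>I. A i)"
  proof
    show "parts_le M d \<subseteq> (\<Union>i\<in>I. A i)"
    proof
      fix P assume P: "P \<in> parts_le M d"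
      define Q where "Q = {#x \<in># P. x \<noteq> M#}"
      define c where "c = count P M"
      have "P = Q + {#x \<in># P. \<not> x \<noteq> M#}" unfolding Q_def by (rule multiset_partition)
      also have "{#x \<in># P. \<not> x \<noteq> M#} = replicate_mset c M"
        unfolding c_def using filter_eq_replicate_mset[where D=P and x=M] by simp
      finally have PQ: "P = Q + replicate_mset c M" .
      have sP: "sum_mset P = d" using P unfolding parts_le_def int_partitions_def by auto
      moreover have "sum_mset P = sum_mset Q + c * M" by (subst PQ) simp
      ultimately have sQ: "sum_mset Q + c * M = d" by simp
      define i where "i = sum_mset Q"
      have iI: "i \<in> I" unfolding I_def i_def using sQ by auto
      have ci: "(d - i) div M = c" using sQ M0 unfolding i_def by auto
      have "Q \<in> parts_le N i"
        using P unfolding parts_le_def int_partitions_def Q_def i_def M_def by auto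
      then have "P \<in> A i" unfolding A_def phi_def using PQ ci by auto
      then show "P \<in> (\<Union>i\<in>I. A i)" using iI by auto
    qed
  next
    show "(\<Union>i\<in>I. A i) \<subseteq> parts_le M d"
    proof clarify
      fix i P assume i: "i \<in> I" and "P \<in> A i"
      then obtain Q where Q: "Q \<in> parts_le N i" and PQ: "P = phi i Q" unfolding A_def by auto
      have "sum_mset P = i + (d - i) div M * M" using Q unfolding PQ phi_def parts_le_def int_partitions_def by simp
      also have "\<dots> = d" using i unfolding I_def by auto
      finally show "P \<in> parts_le M d" using Q unfolding PQ phi_def parts_le_def int_partitions_def M_def
        by auto
    qed
  qed
  have disj: "\<forall>i\<in>I. \<forall>j\<in>I. i \<noteq> j \<longrightarrow> A i \<inter> A j = {}"
  proof (intro ballI impI)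
    fix i j assume i: "i \<in> I" and j: "j \<in> I" and ij: "i \<noteq> j"
    show "A i \<inter> A j = {}"
    proof (rule ccontr)
      assume "A i \<inter> A j \<noteq> {}"
      then obtain Q Q' where Q: "Q \<in> parts_le N i" and Q': "Q' \<in> parts_le N j"
        and e: "phi i Q = phi j Q'" unfolding A_def by auto
      have "count (phi i Q) M = (d - i) div M" unfolding phi_def using noM[OF Q] by (simp add: not_in_iff)
      moreover have "count (phi j Q') M = (d - j) div M" unfolding phi_def using noM[OF Q'] by (simp add: not_in_iff)
      ultimately have "(d - i) div M = (d - j) div M" using e by simp
      moreover have "d - i = (d - i) div M * M" using i unfolding I_def by simp
      moreover have "d - j = (d - j) div M * M" using j unfolding I_def by simp
      ultimately have "d - i = d - j" by simp
      then show False using i j ij unfolding I_def by auto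
    qed
  qed
  have "card (parts_le M d) = (\<Sum>i\<in>I. card (A i))"
    unfolding eq by (rule card_UN_disjoint[OF _ _ disj]) (auto simp: I_def A_def finite_parts_le)
  also have "\<dots> = (\<Sum>i\<in>I. card (parts_le N i))"
    unfolding A_def by (intro sum.cong refl card_image) (auto simp: inj_on_def phi_def)
  also have "\<dots> = (\<Sum>i=0..d. (if M dvd (d - i) then card (parts_le N i) else 0))"
    unfolding I_def by (rule sum.inter_filter) simp
  finally show ?thesis unfolding M_def .
qed

lemma HH_nth: "fps_nth (HH i) k = (if i dvd k then 1 else 0)"
  unfolding HH_def by simp

lemma G_coeff: "fps_nth (\<Prod>i\<in>{1..N}. HH i) d = int (card (parts_le N d))"
proof (induction N arbitrary: d)
  case 0
  then show ?case by (simp add: parts_le_0)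
next
  case (Suc N)
  have "(\<Prod>i\<in>{1..Suc N}. HH i) = (\<Prod>i\<in>{1..N}. HH i) * HH (Suc N)"
    by (simp add: mult.commute)
  then have "fps_nth (\<Prod>i\<in>{1..Suc N}. HH i) d =
      (\<Sum>i=0..d. fps_nth (\<Prod>i\<in>{1..N}. HH i) i * fps_nth (HH (Suc N)) (d - i))"
    by (simp only: fps_mult_nth)
  also have "\<dots> = (\<Sum>i=0..d. int (card (parts_le N i)) * (if Suc N dvd (d - i) then 1 else 0))"
    by (simp only: Suc.IH HH_nth)
  also have "\<dots> = int (\<Sum>i=0..d. (if Suc N dvd (d - i) then card (parts_le N i) else 0))"
    by (simp add: of_nat_sum if_distrib cong: if_cong)
  also have "\<dots> = int (card (parts_le (Suc N) d))" using parts_rec by simp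
  finally show ?case .
qed


lemma conv:
  assumes "1 \<le> n"
  shows "(\<Sum>i=0..n. omega (int i) * int (card (int_partitions (n - i)))) = 0"
proof -
  have "PP (fps_X::int fps) 0 n * (\<Prod>i\<in>{1..n}. HH i) = (\<Prod>i\<in>{1..n}. (1 - fps_X ^ i) * HH i)"
    unfolding PP_def by (simp add: prod.distrib)
  also have "\<dots> = 1" by (intro prod.neutral) (auto intro: HH_inv)
  finally have e: "PP (fps_X::int fps) 0 n * (\<Prod>i\<in>{1..n}. HH i) = 1" .
  have "0 = fps_nth (PP (fps_X::int fps) 0 n * (\<Prod>i\<in>{1..n}. HH i)) n"
    unfolding e using assms by simp
  also have "\<dots> = (\<Sum>i=0..n. fps_nth (PP (fps_X::int fps) 0 n) i * fps_nth (\<Prod>i\<in>{1..n}. HH i) (n - i))"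
    by (rule fps_mult_nth)
  also have "\<dots> = (\<Sum>i=0..n. omega (int i) * int (card (int_partitions (n - i))))"
  proof (rule sum.cong[OF refl])
    fix i assume "i \<in> {0..n}"
    then have i: "i \<le> n" "n - i \<le> n" by auto
    show "fps_nth (PP (fps_X::int fps) 0 n) i * fps_nth (\<Prod>i\<in>{1..n}. HH i) (n - i) =
      omega (int i) * int (card (int_partitions (n - i)))"
      by (simp only: coeff_E_omega[OF i(1)] G_coeff parts_le_big[OF i(2)])
  qed
  finally show ?thesis by simp
qed

lemma int_partitions_0: "int_partitions 0 = {{#}}"
proof -
  have "P \<in> int_partitions 0 \<longleftrightarrow> P = {#}" for P
    unfolding int_partitions_def by (cases P) auto
  then show ?thesis by auto
qed

lemma conv2:
  assumes "1 \<le> n"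
  shows "(\<Sum>d=1..n. omega (int n - int d) * int (card (int_partitions d))) = - omega (int n)"
proof -
  have "(\<Sum>d=0..n. omega (int (n - d)) * int (card (int_partitions d))) = 0"
    using conv[OF assms] by (subst sum.atLeastAtMost_rev) simp
  moreover have "(\<Sum>d=0..n. omega (int (n - d)) * int (card (int_partitions d))) =
      omega (int n) + (\<Sum>d=1..n. omega (int (n - d)) * int (card (int_partitions d)))"
    by (simp add: sum.atLeast_Suc_atMost int_partitions_0)
  moreover have "(\<Sum>d=1..n. omega (int (n - d)) * int (card (int_partitions d))) =
      (\<Sum>d=1..n. omega (int n - int d) * int (card (int_partitions d)))"
    by (intro sum.cong refl) (simp add: of_nat_diff)
  ultimately show ?thesis by simp
qed


lemma Gcd_img: "Gcd (set_mset (image_mset ((*) (c::nat)) Q)) = c * Gcd (set_mset Q)"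
  by (simp add: Gcd_mult)

lemma img_inj:
  assumes "0 < (c::nat)" "image_mset ((*) c) Q = image_mset ((*) c) Q'"
  shows "Q = Q'"
proof -
  have "image_mset (\<lambda>x. x div c) (image_mset ((*) c) Q) = image_mset (\<lambda>x. x div c) (image_mset ((*) c) Q')"
    using assms(2) by simp
  then show ?thesis using assms(1) by (simp add: multiset.map_comp o_def)
qed

lemma sum_img: "sum_mset (image_mset ((*) (c::nat)) Q) = c * sum_mset Q"
  by (induction Q) (simp_all add: algebra_simps)

lemma p_div:
  assumes "1 \<le> d"
  shows "card (int_partitions d) = (\<Sum>m\<in>{m\<in>{1..d}. m dvd d}. p_psi m)"
proof -
  define Dv where "Dv = {m\<in>{1..d}. m dvd d}"
  define RP where "RP m = {Q \<in> int_partitions m. Gcd (set_mset Q) = 1}" for m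
  define A where "A m = image_mset ((*) (d div m)) ` RP m" for m
  have dm: "0 < d div m" if "m \<in> Dv" for m
  proof -
    have "m * (d div m) = d" using that unfolding Dv_def by simp
    then show ?thesis using assms by (cases "d div m") auto
  qed
  have eq: "int_partitions d = (\<Union>m\<in>Dv. A m)"
  proof
    show "int_partitions d \<subseteq> (\<Union>m\<in>Dv. A m)"
    proof
      fix P assume P: "P \<in> int_partitions d"
      then have pos: "\<forall>x\<in>#P. 0 < x" and sP: "sum_mset P = d" unfolding int_partitions_def by auto
      define g where "g = Gcd (set_mset P)"
      have "P \<noteq> {#}" using sP assms by auto
      then obtain x where "x \<in># P" by auto
      have gx: "g dvd x" if "x \<in># P" for x unfolding g_def using that by (simp add: Gcd_dvd)
      have g0: "0 < g"
      proof (rule ccontr)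
        assume "\<not> 0 < g"
        then have "g = 0" by simp
        then show False using gx[OF \<open>x \<in># P\<close>] pos \<open>x \<in># P\<close> by auto
      qed
      define Q where "Q = image_mset (\<lambda>x. x div g) P"
      have PQ: "P = image_mset ((*) g) Q"
        unfolding Q_def multiset.map_comp o_def using gx
        by (simp add: multiset.map_ident_strong)
      define m where "m = sum_mset Q"
      have dgm: "d = g * m" using sP unfolding PQ m_def sum_img by simp
      then have m1: "1 \<le> m" using assms by (cases m) auto
      have mD: "m \<in> Dv" unfolding Dv_def using dgm m1 g0 by auto
      have dmg: "d div m = g" using dgm m1 by simp
      have "Gcd (set_mset P) = g * Gcd (set_mset Q)" unfolding PQ Gcd_img by simp
      then have "g * Gcd (set_mset Q) = g * 1" using g_def by (metis mult_1_right)
      then have gQ: "Gcd (set_mset Q) = 1" using g0 mult_left_cancel[of g] by simp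
      have Qpos: "\<forall>x\<in>#Q. 0 < x" using pos unfolding PQ by auto
      have "Q \<in> RP m" unfolding RP_def int_partitions_def m_def using gQ Qpos by auto
      then show "P \<in> (\<Union>m\<in>Dv. A m)" using mD PQ dmg unfolding A_def by auto
    qed
  next
    show "(\<Union>m\<in>Dv. A m) \<subseteq> int_partitions d"
    proof clarify
      fix m P assume m: "m \<in> Dv" and "P \<in> A m"
      then obtain Q where Q: "Q \<in> RP m" and PQ: "P = image_mset ((*) (d div m)) Q" unfolding A_def by auto
      have "sum_mset P = d div m * m" using Q unfolding PQ sum_img RP_def int_partitions_def by simp
      also have "\<dots> = d" using m unfolding Dv_def by simp
      finally show "P \<in> int_partitions d"
        using Q dm[OF m] unfolding PQ RP_def int_partitions_def by auto
    qed
  qed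
  have gA: "Gcd (set_mset P) = d div m" if "m \<in> Dv" "P \<in> A m" for m P
    using that unfolding A_def RP_def by (auto simp: Gcd_img Gcd_mult)
  have disj: "\<forall>i\<in>Dv. \<forall>j\<in>Dv. i \<noteq> j \<longrightarrow> A i \<inter> A j = {}"
  proof (intro ballI impI)
    fix i j assume i: "i \<in> Dv" and j: "j \<in> Dv" and ij: "i \<noteq> j"
    show "A i \<inter> A j = {}"
    proof (rule ccontr)
      assume "A i \<inter> A j \<noteq> {}"
      then obtain P where "P \<in> A i" "P \<in> A j" by auto
      then have e: "d div i = d div j" using gA i j by metis
      have "i = d div (d div i)" using i unfolding Dv_def by (auto simp: div_div_eq_right)
      moreover have "j = d div (d div j)" using j unfolding Dv_def by (auto simp: div_div_eq_right)
      ultimately show False using e ij by simp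
    qed
  qed
  have finRP: "finite (RP m)" for m unfolding RP_def using finite_int_partitions by auto
  have "card (int_partitions d) = (\<Sum>m\<in>Dv. card (A m))"
    unfolding eq by (rule card_UN_disjoint[OF _ _ disj]) (auto simp: Dv_def A_def finRP)
  also have "\<dots> = (\<Sum>m\<in>Dv. card (RP m))"
  proof (rule sum.cong[OF refl])
    fix m assume m: "m \<in> Dv"
    show "card (A m) = card (RP m)" unfolding A_def
      by (rule card_image) (auto simp: inj_on_def dest: img_inj[OF dm[OF m]])
  qed
  finally show ?thesis unfolding Dv_def RP_def p_psi_def .
qed


lemma omega_neg:
  assumes "x < 0"
  shows "omega x = 0"
proof -
  have "\<not> pent x j" for j
  proof -
    have "j \<le> j ^ 2" by (cases j) (auto simp: power2_eq_square)
    then have "int j \<le> int j ^ 2" by (metis of_nat_le_iff of_nat_power)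
    moreover have "0 \<le> int j" by simp
    ultimately have h: "0 \<le> 3 * int j ^ 2 - int j" "0 \<le> 3 * int j ^ 2 + int j" by linarith+
    show ?thesis
    proof
      assume "pent x j"
      then have "2 * x = 3 * int j ^ 2 + int j \<or> 2 * x = 3 * int j ^ 2 - int j"
        unfolding pent_def by simp
      then show False using h assms by (elim disjE) linarith+
    qed
  qed
  then show ?thesis unfolding omega_def using assms by auto
qed

lemma Omega_eq:
  assumes "1 \<le> m" "m \<le> n"
  shows "Omega m (int n - int m) = (\<Sum>d\<in>{d\<in>{1..n}. m dvd d}. omega (int n - int d))"
proof -
  define f where "f j = omega (int n - int (m * (j + 1)))" for j
  define J where "J = {j. m * (j + 1) \<le> n}"
  have JS: "J \<subseteq> {..n - m}"
  proof
    fix j assume "j \<in> J"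
    then have "m * j + m \<le> n" unfolding J_def by (simp add: algebra_simps)
    moreover have "j \<le> m * j" using assms(1) by simp
    ultimately have "j + m \<le> n" by linarith
    then show "j \<in> {..n - m}" by simp
  qed
  have "Omega m (int n - int m) = (\<Sum>j\<le>n - m. f j)"
    unfolding Omega_def f_def using assms(2)
    by (intro sum.cong) (auto simp: nat_diff_distrib algebra_simps of_nat_diff)
  also have "\<dots> = (\<Sum>j\<in>J. f j)"
  proof (rule sum.mono_neutral_right[OF _ JS])
    show "\<forall>i\<in>{..n - m} - J. f i = 0"
    proof
      fix i assume "i \<in> {..n - m} - J"
      then have "n < m * (i + 1)" unfolding J_def by auto
      then show "f i = 0" unfolding f_def by (intro omega_neg) linarith
    qed
  qed simp
  also have "\<dots> = (\<Sum>d\<in>{d\<in>{1..n}. m dvd d}. omega (int n - int d))"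
  proof (rule sum.reindex_bij_witness[where i = "\<lambda>d. d div m - 1" and j = "\<lambda>j. m * (j + 1)"])
    fix j assume "j \<in> J"
    then show "m * (j + 1) div m - 1 = j" "m * (j + 1) \<in> {d \<in> {1..n}. m dvd d}"
      using assms(1) unfolding J_def by auto
    show "omega (int n - int (m * (j + 1))) = f j" unfolding f_def ..
  next
    fix d assume d: "d \<in> {d \<in> {1..n}. m dvd d}"
    then obtain k where k: "d = m * k" by auto
    have k1: "1 \<le> k" using d k by (cases k) auto
    have dk: "d div m = k" using k assms(1) by simp
    show "m * (d div m - 1 + 1) = d" using dk k k1 by simp
    have e: "m * (k - 1 + 1) = d" using k k1 by simp
    show "d div m - 1 \<in> J" unfolding J_def dk mem_Collect_eq e using d by simp
  qed
  finally show ?thesis .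
qed

theorem mainTheorem8:
  fixes n :: nat
  assumes "1 \<le> n"
  shows "- omega (int n) = (\<Sum>m = 1..n. int (p_psi m) * Omega m (int n - int m))"
proof -
  have "(\<Sum>m = 1..n. int (p_psi m) * Omega m (int n - int m)) =
      (\<Sum>m = 1..n. \<Sum>d\<in>{d\<in>{1..n}. m dvd d}. int (p_psi m) * omega (int n - int d))"
    by (intro sum.cong refl) (simp add: Omega_eq sum_distrib_left)
  also have "\<dots> = (\<Sum>d = 1..n. \<Sum>m\<in>{m\<in>{1..n}. m dvd d}. int (p_psi m) * omega (int n - int d))"
    by (rule sum.swap_restrict) auto
  also have "\<dots> = (\<Sum>d = 1..n. omega (int n - int d) * int (card (int_partitions d)))"
  proof (rule sum.cong[OF refl])
    fix d assume d: "d \<in> {1..n}"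
    have "{m\<in>{1..n}. m dvd d} = {m\<in>{1..d}. m dvd d}" using d by (auto dest: dvd_imp_le)
    then show "(\<Sum>m\<in>{m\<in>{1..n}. m dvd d}. int (p_psi m) * omega (int n - int d)) =
        omega (int n - int d) * int (card (int_partitions d))"
      using d by (simp add: p_div of_nat_sum sum_distrib_left mult.commute)
  qed
  also have "\<dots> = - omega (int n)" using conv2[OF assms] .
  finally show ?thesis by simp
qed

end
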